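(* Let $k\ge 2$ be an even integer and $\ell\ge 2$ an integer. Then the rational number $$\frac{(k+1)(\ell-1)B_k}{\ell^{k+1}-1}$$ has $2$-adic valuation exactly $-1$. Consequently, for every integer $n\ge 2$ dividing $k$, there is no polynomial $f\in\mathbb{Q}[x]$ with $$\frac{B_{k+1}(\ell x+1)-B_{k+1}(x+1)}{x}=(\ell^{k+1}-1)f(x)^n.$$
   Context: $B_i$ denote the Bernoulli numbers ($B_0=1$, $B_1=-1/2$, $B_2=1/6,\dots$) and $B_q(x)=\sum_{i=0}^{q}\binom{q}{i}B_i x^{q-i}$ the Bernoulli polynomials. The $2$-adic valuation of a nonzero rational $a/b$ is $v_2(a)-v_2(b)$. *)

theory Defs
  imports "HOL-Computational_Algebra.Computational_Algebra"
begin

text \<open>Bernoulli numbers with B_0 = 1, B_1 = -1/2, defined by the standard recursion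
  sum_{i=0}^{m} (m+1 choose i) B_i = 0 for m >= 1.\<close>
fun bernoulli :: "nat \<Rightarrow> rat" where
  "bernoulli n = (if n = 0 then 1
     else - (\<Sum>i<n. of_nat (Suc n choose i) * bernoulli i) / of_nat (Suc n))"

definition bernpoly :: "nat \<Rightarrow> rat \<Rightarrow> rat" where
  "bernpoly q x = (\<Sum>i\<le>q. of_nat (q choose i) * bernoulli i * x ^ (q - i))"

definition val2 :: "rat \<Rightarrow> int" where
  "val2 r = (case quotient_of r of (a, b) \<Rightarrow>
      int (multiplicity (2::int) a) - int (multiplicity (2::int) b))"

lemma "bernoulli 0 = 1" "bernoulli 1 = -1/2" "bernoulli 2 = 1/6"
  by (simp_all add: numeral_2_eq_2)

end

theory Submission
  imports Defs
begin

declare bernoulli.simps[simp del]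

lemma bern_rec:
  assumes "n \<ge> 1"
  shows "(\<Sum>i\<le>n. of_nat (Suc n choose i) * bernoulli i) = 0"
proof -
  have "bernoulli n = - (\<Sum>i<n. of_nat (Suc n choose i) * bernoulli i) / of_nat (Suc n)"
    using assms by (simp add: bernoulli.simps)
  then have "of_nat (Suc n) * bernoulli n = - (\<Sum>i<n. of_nat (Suc n choose i) * bernoulli i)"
    by (simp add: field_simps del: of_nat_Suc)
  moreover have "(Suc n choose n) = Suc n" by simp
  ultimately show ?thesis
    by (simp add: lessThan_Suc_atMost[symmetric] del: of_nat_Suc)
qed

definition EE :: "rat fps" where "EE = Abs_fps (\<lambda>n. bernoulli n / fact n)"
definition DD :: "rat fps" where "DD = Abs_fps (\<lambda>n. 1 / fact (Suc n))"
definition DD' :: "rat fps" where "DD' = Abs_fps (\<lambda>n. (-1)^n / fact (Suc n))"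
definition EE' :: "rat fps" where "EE' = Abs_fps (\<lambda>n. (-1)^n * bernoulli n / fact n)"

lemma fact_split: "i \<le> n \<Longrightarrow> 1 / (fact i * fact (Suc n - i) :: rat) = of_nat (Suc n choose i) / fact (Suc n)"
proof -
  assume "i \<le> n"
  then have "(of_nat (Suc n choose i) :: rat) = fact (Suc n) / (fact i * fact (Suc n - i))"
    by (intro binomial_fact) simp
  then show ?thesis by (simp del: fact_Suc of_nat_Suc)
qed

lemma EE_DD: "EE * DD = 1"
proof (rule fps_ext)
  fix n
  have "(EE * DD) $ n = (\<Sum>i=0..n. bernoulli i / fact i * (1 / fact (Suc (n - i))))"
    by (simp add: fps_mult_nth EE_def DD_def)
  also have "\<dots> = (\<Sum>i\<le>n. of_nat (Suc n choose i) * bernoulli i) / fact (Suc n)"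
    unfolding sum_divide_distrib atLeast0AtMost
  proof (rule sum.cong)
    fix i assume "i \<in> {..n}"
    then have "i \<le> n" by simp
    then have "Suc (n - i) = Suc n - i" by simp
    then show "bernoulli i / fact i * (1 / fact (Suc (n - i))) = of_nat (Suc n choose i) * bernoulli i / fact (Suc n)"
      using fact_split[OF \<open>i \<le> n\<close>] by (simp add: field_simps)
  qed simp
  also have "\<dots> = (1::rat fps) $ n"
  proof (cases "n = 0")
    case True then show ?thesis by (simp add: bernoulli.simps)
  next
    case False then show ?thesis by (simp add: bern_rec)
  qed
  finally show "(EE * DD) $ n = (1::rat fps) $ n" .
qed

lemma X_DD: "fps_X * DD = fps_exp 1 - 1"
proof (rule fps_ext)
  fix n show "(fps_X * DD) $ n = (fps_exp 1 - 1) $ n"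
    by (cases n) (simp_all add: DD_def algebra_simps)
qed

lemma DD'_eq: "DD' = fps_exp (-1) * DD"
proof (rule fps_ext)
  fix n
  have "(fps_exp (-1) * DD) $ n = (\<Sum>i=0..n. (-1)^i / fact i * (1 / fact (Suc (n - i))))"
    by (simp add: fps_mult_nth DD_def)
  also have "\<dots> = (\<Sum>i\<le>n. (-1)^i * of_nat (Suc n choose i)) / fact (Suc n)"
    unfolding sum_divide_distrib atLeast0AtMost
  proof (rule sum.cong)
    fix i assume "i \<in> {..n}"
    then have "i \<le> n" by simp
    then have "Suc (n - i) = Suc n - i" by simp
    then show "(-1)^i / fact i * (1 / fact (Suc (n - i))) = ((-1)^i * of_nat (Suc n choose i) / fact (Suc n :: nat) :: rat)"
      using fact_split[OF \<open>i \<le> n\<close>] by (simp add: field_simps)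
  qed simp
  also have "(\<Sum>i\<le>n. (-1)^i * of_nat (Suc n choose i)) = (-1::rat)^n"
  proof -
    have "(\<Sum>i\<le>Suc n. (-1)^i * of_nat (Suc n choose i)) = (0::rat)"
      by (rule choose_alternating_sum) simp
    then show ?thesis by simp
  qed
  finally show "DD' $ n = (fps_exp (-1) * DD) $ n" by (simp add: DD'_def)
qed

lemma EE'_DD': "EE' * DD' = 1"
proof (rule fps_ext)
  fix n
  have "(EE' * DD') $ n = (\<Sum>i=0..n. (-1)^n * (bernoulli i / fact i * (1 / fact (Suc (n - i)))))"
  proof -
    have "(EE' * DD') $ n = (\<Sum>i=0..n. (-1)^i * bernoulli i / fact i * ((-1)^(n-i) / fact (Suc (n - i))))"
      by (simp add: fps_mult_nth EE'_def DD'_def)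
    also have "\<dots> = (\<Sum>i=0..n. (-1)^n * (bernoulli i / fact i * (1 / fact (Suc (n - i)))))"
    proof (rule sum.cong)
      fix i assume "i \<in> {0..n}"
      then have "(-1::rat)^i * (-1)^(n-i) = (-1)^n" by (simp add: power_add[symmetric])
      then show "(-1)^i * bernoulli i / fact i * ((-1)^(n-i) / fact (Suc (n - i))) = (-1)^n * (bernoulli i / fact i * (1 / fact (Suc (n - i))))"
        by (simp add: field_simps)
    qed simp
    finally show ?thesis .
  qed
  also have "\<dots> = (-1)^n * (EE * DD) $ n"
    by (simp add: fps_mult_nth EE_def DD_def sum_distrib_left)
  also have "\<dots> = (1::rat fps) $ n" by (simp add: EE_DD)
  finally show "(EE' * DD') $ n = (1::rat fps) $ n" .
qed

lemma EE'_eq: "EE' = EE + fps_X"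
proof -
  have "(EE + fps_X) * DD' = fps_exp (-1) * (EE * DD + fps_X * DD)"
    by (simp add: DD'_eq algebra_simps)
  also have "\<dots> = fps_exp (-1) * fps_exp 1"
    by (simp add: EE_DD X_DD)
  also have "\<dots> = 1"
    by (simp flip: fps_exp_add_mult)
  finally have F: "(EE + fps_X) * DD' = 1" .
  have "EE' = EE' * ((EE + fps_X) * DD')" by (simp add: F)
  also have "\<dots> = (EE + fps_X) * (EE' * DD')" by (simp add: algebra_simps)
  also have "\<dots> = EE + fps_X" by (simp add: EE'_DD')
  finally show ?thesis .
qed

lemma bern_odd:
  assumes "odd n" "n \<ge> 3"
  shows "bernoulli n = 0"
proof -
  have "EE' $ n = (EE + fps_X) $ n" by (simp add: EE'_eq)
  then have "- bernoulli n / fact n = bernoulli n / fact n"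
    using assms by (simp add: EE'_def EE_def)
  then show ?thesis by simp
qed


definition Z2 :: "rat \<Rightarrow> bool" where
  "Z2 r \<longleftrightarrow> (\<exists>a b::int. odd b \<and> r = of_int a / of_int b)"

lemma Z2_int[simp]: "Z2 (of_int a)"
  unfolding Z2_def by (rule exI[of _ a], rule exI[of _ 1]) simp

lemma Z2_0[simp]: "Z2 0"
  using Z2_int[of 0] by simp

lemma Z2_nat[simp]: "Z2 (of_nat a)"
  using Z2_int[of "int a"] by simp

lemma Z2_add: "Z2 x \<Longrightarrow> Z2 y \<Longrightarrow> Z2 (x + y)"
  unfolding Z2_def
proof (elim exE conjE)
  fix a b c d :: int
  assume "odd b" "x = of_int a / of_int b" "odd d" "y = of_int c / of_int d"
  moreover have "b \<noteq> 0" "d \<noteq> 0" using \<open>odd b\<close> \<open>odd d\<close> by auto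
  ultimately show "\<exists>a b. odd b \<and> x + y = of_int a / of_int b"
    by (intro exI[of _ "a*d + c*b"] exI[of _ "b*d"]) (simp add: field_simps)
qed

lemma Z2_mult: "Z2 x \<Longrightarrow> Z2 y \<Longrightarrow> Z2 (x * y)"
  unfolding Z2_def
proof (elim exE conjE)
  fix a b c d :: int
  assume "odd b" "x = of_int a / of_int b" "odd d" "y = of_int c / of_int d"
  then show "\<exists>a b. odd b \<and> x * y = of_int a / of_int b"
    by (intro exI[of _ "a*c"] exI[of _ "b*d"]) simp
qed

lemma Z2_uminus: "Z2 x \<Longrightarrow> Z2 (- x)"
  using Z2_mult[of "-1" x] Z2_int[of "-1"] by simp

lemma Z2_diff: "Z2 x \<Longrightarrow> Z2 y \<Longrightarrow> Z2 (x - y)"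
  using Z2_add[of x "-y"] Z2_uminus by simp

lemma Z2_div: "Z2 x \<Longrightarrow> odd c \<Longrightarrow> Z2 (x / of_int c)"
  unfolding Z2_def
proof (elim exE conjE)
  fix a b :: int
  assume "odd b" "x = of_int a / of_int b" "odd c"
  then show "\<exists>a b. odd b \<and> x / of_int c = of_int a / of_int b"
    by (intro exI[of _ "a"] exI[of _ "b*c"]) simp
qed

lemma Z2_sum: "(\<And>i. i \<in> A \<Longrightarrow> Z2 (f i)) \<Longrightarrow> Z2 (\<Sum>i\<in>A. f i)"
proof (induction A rule: infinite_finite_induct)
  case (insert x F) then show ?case by (simp add: Z2_add)
qed simp_all

definition ee :: "nat \<Rightarrow> int" where
  "ee i = (if i = 0 then 2 else if i = 1 then -1 else if even i then 1 else 0)"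

lemma even_choose_sum:
  fixes m :: nat assumes "even m" "m \<ge> 2"
  shows "(\<Sum>i<m. of_nat (Suc m choose i) * ee i) = (2::int)^m - 2 * int m - 1"
proof -
  have E: "2 * (\<Sum>i\<le>Suc m. if even i then int (Suc m choose i) else 0) = 2 ^ Suc m"
    by (rule choose_even_sum) simp
  have S1: "(\<Sum>i\<le>Suc m. if even i then int (Suc m choose i) else 0)
      = (\<Sum>i<m. if even i then int (Suc m choose i) else 0) + int (Suc m)"
    using assms by (simp add: lessThan_Suc_atMost[symmetric])
  have S2: "(\<Sum>i<m. if even i then int (Suc m choose i) else 0)
      = (\<Sum>i<m. int (Suc m choose i) * ee i) - 1 + int (Suc m)"
  proof -
    have "(\<Sum>i<m. int (Suc m choose i) * ee i)
        = (\<Sum>i<m. (if even i then int (Suc m choose i) else 0)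
            + (if i = 0 then 1 else 0) - (if i = 1 then int (Suc m) else 0))"
      by (rule sum.cong) (auto simp: ee_def)
    also have "\<dots> = (\<Sum>i<m. if even i then int (Suc m choose i) else 0) + 1 - int (Suc m)"
      using assms by (simp add: sum.distrib sum_subtractf)
    finally show ?thesis by simp
  qed
  have "(2::int) ^ Suc m = 2 * 2 ^ m" by simp
  then show ?thesis using E S1 S2 by simp
qed

lemma bern_main:
  "even m \<Longrightarrow> m \<ge> 2 \<Longrightarrow> \<exists>z. Z2 z \<and> 2 * bernoulli m = 1 + 2 * z"
proof (induction m rule: less_induct)
  case (less m)
  define z where "z i = (2 * bernoulli i - of_int (ee i)) / 2" for i
  have Zz: "Z2 (z i)" if "i < m" for i
  proof -
    consider "i = 0" | "i = 1" | "odd i" "i \<ge> 3" | "even i" "i \<ge> 2"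
    proof -
      have "i=0 \<or> i=1 \<or> (odd i \<and> i\<ge>3) \<or> (even i \<and> i\<ge>2)" by presburger
      then show thesis using that by blast
    qed
    then show ?thesis
    proof cases
      case 1 then show ?thesis by (simp add: z_def ee_def bernoulli.simps)
    next
      case 2
      have "bernoulli 1 = -1/2" by (simp add: bernoulli.simps)
      with 2 show ?thesis by (simp add: z_def ee_def)
    next
      case 3 then show ?thesis by (simp add: z_def ee_def bern_odd)
    next
      case 4
      with less.IH[of i] that less.prems obtain w where "Z2 w" "2 * bernoulli i = 1 + 2 * w" by auto
      with 4 show ?thesis by (simp add: z_def ee_def)
    qed
  qed
  have B: "2 * bernoulli i = of_int (ee i) + 2 * z i" for i
    by (simp add: z_def field_simps)
  have R: "(\<Sum>i\<le>m. of_nat (Suc m choose i) * bernoulli i) = 0"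
    using less.prems by (intro bern_rec) simp
  have "(\<Sum>i\<le>m. of_nat (Suc m choose i) * bernoulli i)
      = (\<Sum>i<m. of_nat (Suc m choose i) * bernoulli i) + of_nat (Suc m) * bernoulli m"
    by (simp add: lessThan_Suc_atMost[symmetric] del: of_nat_Suc)
  with R have "(\<Sum>i<m. of_nat (Suc m choose i) * bernoulli i) + of_nat (Suc m) * bernoulli m = 0" by simp
  note H = this
  have R2: "of_nat (Suc m) * (2 * bernoulli m) = - (\<Sum>i<m. of_nat (Suc m choose i) * (2 * bernoulli i))"
  proof -
    have "(\<Sum>i<m. of_nat (Suc m choose i) * (2 * bernoulli i)) = 2 * (\<Sum>i<m. of_nat (Suc m choose i) * bernoulli i)"
      by (simp add: sum_distrib_left algebra_simps)
    then show ?thesis using H by (simp only:)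
  qed
  define W where "W = (\<Sum>i<m. of_nat (Suc m choose i) * z i)"
  have ZW: "Z2 W" unfolding W_def by (intro Z2_sum Z2_mult Z2_nat Zz) simp
  have "(\<Sum>i<m. of_nat (Suc m choose i) * (2 * bernoulli i))
      = (\<Sum>i<m. of_int (of_nat (Suc m choose i) * ee i)) + 2 * W"
    unfolding B W_def by (simp add: sum.distrib sum_distrib_left algebra_simps)
  also have "(\<Sum>i<m. of_int (of_nat (Suc m choose i) * ee i)) = (of_int (\<Sum>i<m. of_nat (Suc m choose i) * ee i) :: rat)"
    by simp
  also have "\<dots> = of_int (2^m - 2 * int m - 1)"
    using even_choose_sum[OF less.prems] by simp
  finally have R3: "of_nat (Suc m) * (2 * bernoulli m) = - (of_int (2^m - 2 * int m - 1) + 2 * W)"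
    using R2 by simp
  obtain j where j: "m = 2 * j" using less.prems by blast
  obtain t where t: "m = Suc t" using less.prems by (cases m) auto
  define zz where "zz = (of_int (int j - 2^t) - W) / of_int (int (Suc m))"
  have "Z2 zz" unfolding zz_def
    by (intro Z2_div Z2_diff Z2_int ZW) (use j in simp)
  moreover have "2 * bernoulli m = 1 + 2 * zz"
  proof -
    have "(2::int)^m = 2 * 2^t" using t by simp
    then have "(2::rat)^m = 2 * 2^t" by (metis of_int_numeral of_int_power of_int_mult)
    then show ?thesis using R3 j unfolding zz_def
      by (simp add: field_simps del: of_nat_Suc)
  qed
  ultimately show ?case by blast
qed


lemma prime_elem_2: "prime_elem (2::int)"
  by (simp add: prime_imp_prime_elem)

lemma val2_frac:
  fixes a b :: int assumes "a \<noteq> 0" "b \<noteq> 0"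
  shows "val2 (of_int a / of_int b) = int (multiplicity 2 a) - int (multiplicity 2 b)"
proof -
  obtain p q where pq: "quotient_of (of_int a / of_int b) = (p,q)" by (cases "quotient_of (of_int a / of_int b)") auto
  have r: "of_int a / of_int b = (of_int p / of_int q :: rat)" by (rule quotient_of_div[OF pq])
  have "q > 0" using quotient_of_denom_pos[OF pq] .
  then have "(of_int a * of_int q :: rat) = of_int p * of_int b" using r assms by (simp add: field_simps)
  then have aq: "a * q = p * b" by (metis of_int_eq_iff of_int_mult)
  have "p \<noteq> 0" using aq assms \<open>q > 0\<close> by auto
  have "multiplicity 2 (a * q) = multiplicity 2 (p * b)" using aq by simp
  then have "multiplicity 2 a + multiplicity 2 q = multiplicity 2 p + multiplicity (2::int) b"
    using assms \<open>p \<noteq> 0\<close> \<open>q > 0\<close> by (simp add: prime_elem_multiplicity_mult_distrib[OF prime_elem_2])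
  then show ?thesis by (simp add: val2_def pq)
qed

lemma mult2_odd: "odd (a::int) \<Longrightarrow> multiplicity 2 a = 0"
  by (rule not_dvd_imp_multiplicity_0) simp

lemma mult2_double_odd: assumes "odd (a::int)" shows "multiplicity 2 (2 * a) = 1"
proof -
  have "a \<noteq> 0" using assms by auto
  then show ?thesis using multiplicity_times_same[where p="2::int" and x=a] mult2_odd[OF assms] by simp
qed

lemma val2_power_ne: "n \<ge> 2 \<Longrightarrow> val2 (x ^ n) \<noteq> -1"
proof -
  assume n: "n \<ge> 2"
  obtain p q where pq: "quotient_of x = (p,q)" by (cases "quotient_of x") auto
  have x: "x = of_int p / of_int q" by (rule quotient_of_div[OF pq])
  have "q > 0" using quotient_of_denom_pos[OF pq] .
  show ?thesis
  proof (cases "p = 0")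
    case True
    then have "x ^ n = 0" using x n by simp
    then have "val2 (x ^ n) = val2 0" by (simp only:)
    also have "val2 0 = 0" by (simp add: val2_def)
    finally show ?thesis by simp
  next
    case False
    have "x ^ n = of_int (p ^ n) / of_int (q ^ n)" using x by (simp add: power_divide)
    moreover have "val2 (of_int (p ^ n) / of_int (q ^ n)) = int (multiplicity 2 (p^n)) - int (multiplicity 2 (q^n))"
      using False \<open>q > 0\<close> by (intro val2_frac) auto
    ultimately have "val2 (x ^ n) = int (n * multiplicity 2 p) - int (n * multiplicity 2 q)"
      using False \<open>q > 0\<close> by (simp only: prime_elem_multiplicity_power_distrib[OF prime_elem_2] \<open>p\<noteq>0\<close>)
    also have "\<dots> = int n * (int (multiplicity 2 p) - int (multiplicity 2 q))"
      by (simp add: algebra_simps)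
    finally have V: "val2 (x ^ n) = int n * (int (multiplicity 2 p) - int (multiplicity 2 q))" .
    show ?thesis
    proof
      assume "val2 (x ^ n) = -1"
      with V have "int n * (int (multiplicity 2 p) - int (multiplicity 2 q)) = -1" by simp
      then have "int n dvd 1" by (metis dvd_minus_iff dvd_triv_left)
      then show False using n by simp
    qed
  qed
qed

lemma odd_geom: "odd (\<Sum>j<Suc (2*t). (l::nat)^j)"
proof (induction t)
  case (Suc t)
  have "(\<Sum>j<Suc (2*Suc t). l^j) = (\<Sum>j<Suc (2*t). l^j) + l^(2*t) * (l * (l + 1))"
    by (simp add: algebra_simps)
  moreover have "even (l^(2*t) * (l * (l + 1)))" by simp
  ultimately show ?case using Suc.IH by (metis odd_add)
qed simp

definition Gp :: "nat \<Rightarrow> nat \<Rightarrow> rat poly" where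
  "Gp k l = (\<Sum>i\<le>Suc k. smult (of_nat (Suc k choose i) * bernoulli i)
      ([:1, of_nat l:]^(Suc k - i) - [:1,1:]^(Suc k - i)))"

lemma poly_Gp: "poly (Gp k l) x = bernpoly (k+1) (of_nat l * x + 1) - bernpoly (k+1) (x+1)"
  unfolding Gp_def bernpoly_def
  by (simp add: poly_sum sum_subtractf algebra_simps)

lemma poly_Gp0: "poly (Gp k l) 0 = 0"
  unfolding Gp_def by (simp add: poly_sum)

lemma coeff_lin_pow: "coeff ([:1,a:]^m) 1 = of_nat m * (a::rat)"
  by (induction m) (simp_all add: coeff_0_power algebra_simps)

lemma coeff_lin_pow': "coeff ([:1,a:]^m) (Suc 0) = of_nat m * (a::rat)"
  using coeff_lin_pow by (metis One_nat_def)

lemma coeff_Gp: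
  assumes "k \<ge> 2"
  shows "coeff (Gp k l) 1 = of_nat (k+1) * (of_nat l - 1) * bernoulli k"
proof -
  have "coeff (Gp k l) 1 = (\<Sum>i\<le>Suc k. (of_nat l - 1) * (of_nat (Suc k) * (of_nat (k choose i) * bernoulli i)))"
    unfolding Gp_def coeff_sum
  proof (rule sum.cong)
    fix i assume "i \<in> {..Suc k}"
    have "of_nat (Suc k - i) * of_nat (Suc k choose i) = (of_nat (Suc k) * of_nat (k choose i) :: rat)"
      using binomial_absorb_comp[of "Suc k" i] by (metis diff_Suc_1 of_nat_mult)
    note E = this
    have "coeff (smult (of_nat (Suc k choose i) * bernoulli i) ([:1, of_nat l:]^(Suc k - i) - [:1,1:]^(Suc k - i))) 1
      = of_nat (Suc k choose i) * bernoulli i * (of_nat (Suc k - i) * of_nat l - of_nat (Suc k - i))"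
      by (simp add: coeff_lin_pow' del: of_nat_Suc)
    also have "\<dots> = (of_nat l - 1) * bernoulli i * (of_nat (Suc k - i) * of_nat (Suc k choose i))"
      by (simp add: algebra_simps)
    also have "\<dots> = (of_nat l - 1) * (of_nat (Suc k) * (of_nat (k choose i) * bernoulli i))"
      unfolding E by (simp add: algebra_simps)
    finally show "coeff (smult (of_nat (Suc k choose i) * bernoulli i) ([:1, of_nat l:]^(Suc k - i) - [:1,1:]^(Suc k - i))) 1
      = (of_nat l - 1) * (of_nat (Suc k) * (of_nat (k choose i) * bernoulli i))" .
  qed simp
  also have "\<dots> = (of_nat l - 1) * of_nat (Suc k) * (\<Sum>i\<le>k. of_nat (k choose i) * bernoulli i)"
    by (simp add: sum_distrib_left algebra_simps del: of_nat_Suc)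
  also have "(\<Sum>i\<le>k. of_nat (k choose i) * bernoulli i) = bernoulli k"
  proof -
    obtain n where n: "k = Suc n" "n \<ge> 1" using assms by (cases k) auto
    have "(\<Sum>i\<le>n. of_nat (Suc n choose i) * bernoulli i) = 0" using bern_rec n by simp
    then show ?thesis using n by simp
  qed
  finally show ?thesis by (simp add: algebra_simps)
qed


theorem mainTheorem5:
  fixes k l :: nat
  assumes "even k" and "k \<ge> 2" and "l \<ge> 2"
  shows "val2 (of_nat (k + 1) * (of_nat l - 1) * bernoulli k / (of_nat l ^ (k + 1) - 1)) = -1
    \<and> (\<forall>n::nat. n \<ge> 2 \<and> n dvd k \<longrightarrow>
          \<not> (\<exists>f :: rat poly. \<forall>x::rat. x \<noteq> 0 \<longrightarrow>
                (bernpoly (k + 1) (of_nat l * x + 1) - bernpoly (k + 1) (x + 1)) / x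
                  = (of_nat l ^ (k + 1) - 1) * (poly f x) ^ n))"
proof -
  define Q where "Q = of_nat (k + 1) * (of_nat l - 1) * bernoulli k / (of_nat l ^ (k + 1) - (1::rat))"
  have V: "val2 Q = -1"
  proof -
    obtain z where Zz: "Z2 z" and hz: "2 * bernoulli k = 1 + 2 * z"
      using bern_main assms by blast
    obtain a b where b: "odd b" and zab: "z = of_int a / of_int b" using Zz unfolding Z2_def by blast
    obtain t where t: "k = 2 * t" using assms by blast
    define s where "s = (\<Sum>j<Suc (2*t). l^j)"
    have os: "odd s" unfolding s_def by (rule odd_geom)
    have "(of_nat l :: rat) ^ (k+1) - 1 = (of_nat l - 1) * (\<Sum>i<Suc (2*t). (of_nat l)^i)"
      using t power_diff_1_eq[of "of_nat l :: rat" "Suc (2*t)"] by simp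
    also have "(\<Sum>i<Suc (2*t). (of_nat l :: rat)^i) = of_nat s" by (simp add: s_def)
    finally have cs: "(of_nat l :: rat) ^ (k+1) - 1 = (of_nat l - 1) * of_nat s" .
    have bnz: "(of_int b :: rat) \<noteq> 0" using b by auto
    have snz: "(of_nat s :: rat) \<noteq> 0" using os by (cases s) auto
    have lnz: "(of_nat l :: rat) - 1 \<noteq> 0" using assms by simp
    have bk: "bernoulli k = (of_int b + 2 * of_int a) / (2 * of_int b)"
      using hz zab bnz by (simp add: field_simps)
    define A where "A = int (k+1) * (b + 2*a)"
    define B where "B = 2 * (b * int s)"
    have QAB: "Q = of_int A / of_int B"
      unfolding Q_def cs bk A_def B_def using bnz snz lnz by (simp add: field_simps)
    have oA: "odd A" unfolding A_def using assms b by simp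
    have oBs: "odd (b * int s)" using b os by simp
    have "A \<noteq> 0" "B \<noteq> 0" using oA oBs unfolding B_def by (auto, presburger)
    then have "val2 Q = int (multiplicity 2 A) - int (multiplicity 2 B)"
      unfolding QAB by (rule val2_frac)
    also have "\<dots> = -1" unfolding B_def using mult2_odd[OF oA] mult2_double_odd[OF oBs] by simp
    finally show ?thesis .
  qed
  moreover have "\<not> (\<exists>f :: rat poly. \<forall>x::rat. x \<noteq> 0 \<longrightarrow>
                (bernpoly (k + 1) (of_nat l * x + 1) - bernpoly (k + 1) (x + 1)) / x
                  = (of_nat l ^ (k + 1) - 1) * (poly f x) ^ n)" if n: "n \<ge> 2" for n
  proof
    assume "\<exists>f :: rat poly. \<forall>x::rat. x \<noteq> 0 \<longrightarrow>
                (bernpoly (k + 1) (of_nat l * x + 1) - bernpoly (k + 1) (x + 1)) / x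
                  = (of_nat l ^ (k + 1) - 1) * (poly f x) ^ n"
    then obtain f :: "rat poly" where hf: "\<And>x. x \<noteq> 0 \<Longrightarrow>
                (bernpoly (k + 1) (of_nat l * x + 1) - bernpoly (k + 1) (x + 1)) / x
                  = (of_nat l ^ (k + 1) - 1) * (poly f x) ^ n" by blast
    define c where "c = (of_nat l ^ (k + 1) - 1 :: rat)"
    have "poly (Gp k l) = poly (pCons 0 (smult c (f ^ n)))"
    proof
      fix x :: rat
      show "poly (Gp k l) x = poly (pCons 0 (smult c (f ^ n))) x"
      proof (cases "x = 0")
        case True then show ?thesis by (simp add: poly_Gp0)
      next
        case False
        have "poly (Gp k l) x = x * ((bernpoly (k + 1) (of_nat l * x + 1) - bernpoly (k + 1) (x + 1)) / x)"
          using False by (simp add: poly_Gp)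
        also have "\<dots> = x * (c * poly f x ^ n)" using hf[OF False] by (simp add: c_def)
        finally show ?thesis by (simp add: poly_power)
      qed
    qed
    then have G: "Gp k l = pCons 0 (smult c (f ^ n))" by (simp add: poly_eq_poly_eq_iff)
    have "coeff (Gp k l) 1 = c * coeff f 0 ^ n"
      unfolding G by (simp add: coeff_0_power)
    then have "c * coeff f 0 ^ n = of_nat (k+1) * (of_nat l - 1) * bernoulli k"
      using coeff_Gp[OF assms(2)] by simp
    moreover have "c \<noteq> 0"
    proof -
      have "(1::rat) < of_nat l" using assms by simp
      then have "(1::rat) < of_nat l ^ (k+1)" by (rule one_less_power) simp
      then show ?thesis by (simp add: c_def)
    qed
    ultimately have "coeff f 0 ^ n = Q" unfolding Q_def c_def[symmetric] by (simp add: field_simps)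
    then show False using V val2_power_ne[OF n] by metis
  qed
  ultimately show ?thesis unfolding Q_def by blast
qed

end
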